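(* Let $m,k\in\mathbb{Z}$, let $(H,\alpha)$ be a monoidal Hom-bialgebra and $(C,\beta)$ a monoidal Hom-algebra which is a left weak $(H,\alpha)$-Hom-module algebra via $h\otimes c\mapsto h\rightarrow c$ and a left $(H,\alpha)$-Hom-comodule coalgebra with coaction $c\mapsto c_{(-1)}\otimes c_{(0)}$; let $\sigma:H\otimes H\to C$ be a convolution invertible linear map. Let $X=C\otimes H$ with multiplication $(a\otimes h)(b\otimes g)=a[(\alpha^{m}(h_{11})\rightarrow\beta^{-2}(b))\sigma(\alpha^{k+1}(h_{12}),\alpha^{k}(g_{1}))]\otimes\alpha(h_{2}g_{2})$, unit $1_C\otimes1_H$, comultiplication $\Delta(a\otimes h)=a_{1}\otimes\alpha^{m}(a_{2(-1)})\alpha^{-1}(h_{1})\otimes\beta(a_{2(0)})\otimes h_{2}$, counit $\varepsilon(a)\varepsilon(h)$ and structure map $\xi=\beta\otimes\alpha$, and assume $(X,\xi)$ is a monoidal Hom-bialgebra. Define $\varphi^l:H\otimes X\to X$ and $\varphi^r:X\otimes H\to X$ by $$\varphi^{l}(l\otimes(a\otimes h))=(\alpha(l_{11})\rightarrow\beta^{-1}(a))\,\sigma(\alpha^{k+2-m}(l_{12}),\alpha^{k+1}(h_{1}))\otimes\alpha^{1-m}(l_{2})\alpha(h_{2}),$$ $$\varphi^{r}((a\otimes h)\otimes l)=a\,\sigma(\alpha^{k+1}(h_{1}),\alpha^{k+1-m}(l_{1}))\otimes\alpha(h_{2})\alpha^{1-m}(l_{2}).$$ Then $(X,\xi,\varphi^l,\varphi^r)$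 is a weak $(H,\alpha)$ Hom-bimodule, i.e. for all $l,g\in H$, $x\in X$: $\varphi^l(1_H\otimes x)=\xi(x)=\varphi^r(x\otimes1_H)$ and $\varphi^l(\alpha(l)\otimes\varphi^r(x\otimes g))=\varphi^r(\varphi^l(l\otimes x)\otimes\alpha(g))$.
   Context: Field $k$; Sweedler notation. Monoidal Hom-algebra $(A,\beta)$: $\beta(a)(bc)=(ab)\beta(c)$, $\beta(ab)=\beta(a)\beta(b)$, $a1=1a=\beta(a)$, $\beta(1)=1$, $\beta$ a linear automorphism. Monoidal Hom-coalgebra $(C,\gamma)$: $\gamma^{-1}(c_1)\otimes\Delta(c_2)=\Delta(c_1)\otimes\gamma^{-1}(c_2)$, $\Delta\gamma=(\gamma\otimes\gamma)\Delta$, $c_1\varepsilon(c_2)=\gamma^{-1}(c)=\varepsilon(c_1)c_2$, $\varepsilon\gamma=\varepsilon$. Monoidal Hom-bialgebra: both with the same structure map and $\Delta,\varepsilon$ multiplicative and unital. Left weak $(H,\alpha)$-Hom-module algebra: $h\rightarrow(ab)=(h_1\rightarrow a)(h_2\rightarrow b)$, $h\rightarrow1=\varepsilon(h)1$. Left $(H,\alpha)$-Hom-comodule $(M,\mu)$: $\Delta_H(x_{(-1)})\otimes\mu^{-1}(x_{(0)})=\alpha^{-1}(x_{(-1)})\otimes x_{(0)(-1)}\otimes x_{(0)(0)}$, $\rho(\mu(x))=\alpha(x_{(-1)})\otimes\mu(x_{(0)})$, $\varepsilon(x_{(-1)})x_{(0)}=\mu^{-1}(x)$; Hom-comodule coalgebra: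 moreover $b_{(-1)}\otimes b_{(0)1}\otimes b_{(0)2}=b_{1(-1)}b_{2(-1)}\otimes b_{1(0)}\otimes b_{2(0)}$, $\varepsilon(b_{(0)})b_{(-1)}=\varepsilon(b)1_H$. $\sigma$ convolution invertible means there is a linear $\sigma^{-1}:H\otimes H\to C$ with $\sigma(h_1,l_1)\sigma^{-1}(h_2,l_2)=\varepsilon(h)\varepsilon(l)1_C=\sigma^{-1}(h_1,l_1)\sigma(h_2,l_2)$. *)

theory Defs
  imports Complex_Main
begin

text \<open>An element of V1 (x) ... (x) Vn is represented by a list of tuples (a finite sum of
simple tensors).  Two such lists denote the same tensor iff every multilinear form
V1 x ... x Vn -> k takes the same value on them (over a field, multilinear forms
separate the points of a tensor product).  Tuples are nested to the right.\<close>

definition lforms :: "('k::field \<Rightarrow> 'v::ab_group_add \<Rightarrow> 'v) \<Rightarrow> ('v \<Rightarrow> 'k) set" where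
  "lforms s = {f. Vector_Spaces.linear s (*) f}"

definition tforms :: "('a \<Rightarrow> 'k) set \<Rightarrow> ('b \<Rightarrow> 'k) set \<Rightarrow> ('a \<times> 'b \<Rightarrow> 'k::field) set" where
  "tforms FA FB = {f. (\<forall>b. (\<lambda>a. f (a, b)) \<in> FA) \<and> (\<forall>a. (\<lambda>b. f (a, b)) \<in> FB)}"

definition ev :: "('t \<Rightarrow> 'k::comm_monoid_add) \<Rightarrow> 't list \<Rightarrow> 'k" where
  "ev f xs = sum_list (map f xs)"

definition teq :: "('t \<Rightarrow> 'k::comm_monoid_add) set \<Rightarrow> 't list \<Rightarrow> 't list \<Rightarrow> bool" where
  "teq F xs ys \<longleftrightarrow> (\<forall>f\<in>F. ev f xs = ev f ys)"

definition lin_into :: "('k::field \<Rightarrow> 'v::ab_group_add \<Rightarrow> 'v) \<Rightarrow> ('t \<Rightarrow> 'k) set \<Rightarrow> ('v \<Rightarrow> 't list) \<Rightarrow> bool" where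
  "lin_into s F D \<longleftrightarrow> (\<forall>f\<in>F. Vector_Spaces.linear s (*) (\<lambda>x. ev f (D x)))"

definition bilinear_map :: "('k::field \<Rightarrow> 'a::ab_group_add \<Rightarrow> 'a) \<Rightarrow> ('k \<Rightarrow> 'b::ab_group_add \<Rightarrow> 'b)
    \<Rightarrow> ('k \<Rightarrow> 'c::ab_group_add \<Rightarrow> 'c) \<Rightarrow> ('a \<Rightarrow> 'b \<Rightarrow> 'c) \<Rightarrow> bool" where
  "bilinear_map s1 s2 s3 f \<longleftrightarrow>
     (\<forall>b. Vector_Spaces.linear s1 s3 (\<lambda>a. f a b)) \<and> (\<forall>a. Vector_Spaces.linear s2 s3 (f a))"

definition zpow :: "('a \<Rightarrow> 'a) \<Rightarrow> int \<Rightarrow> 'a \<Rightarrow> 'a" where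
  "zpow f n = (if 0 \<le> n then f ^^ nat n else inv f ^^ nat (- n))"

definition mhom_algebra :: "('k::field \<Rightarrow> 'a::ab_group_add \<Rightarrow> 'a) \<Rightarrow> ('a \<Rightarrow> 'a \<Rightarrow> 'a) \<Rightarrow> 'a
    \<Rightarrow> ('a \<Rightarrow> 'a) \<Rightarrow> bool" where
  "mhom_algebra s mul one \<beta> \<longleftrightarrow>
     vector_space s \<and> bilinear_map s s s mul \<and> Vector_Spaces.linear s s \<beta> \<and> bij \<beta> \<and>
     (\<forall>a b c. mul (\<beta> a) (mul b c) = mul (mul a b) (\<beta> c)) \<and>
     (\<forall>a b. \<beta> (mul a b) = mul (\<beta> a) (\<beta> b)) \<and>
     (\<forall>a. mul a one = \<beta> a \<and> mul one a = \<beta> a) \<and> \<beta> one = one"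

definition mhom_coalgebra :: "('k::field \<Rightarrow> 'a::ab_group_add \<Rightarrow> 'a) \<Rightarrow> ('a \<Rightarrow> ('a \<times> 'a) list)
    \<Rightarrow> ('a \<Rightarrow> 'k) \<Rightarrow> ('a \<Rightarrow> 'a) \<Rightarrow> bool" where
  "mhom_coalgebra s D e \<gamma> \<longleftrightarrow>
     vector_space s \<and> lin_into s (tforms (lforms s) (lforms s)) D \<and>
     Vector_Spaces.linear s (*) e \<and> Vector_Spaces.linear s s \<gamma> \<and> bij \<gamma> \<and>
     (\<forall>c. teq (tforms (lforms s) (tforms (lforms s) (lforms s)))
            [(inv \<gamma> x, u, v). (x, y) \<leftarrow> D c, (u, v) \<leftarrow> D y]
            [(u, v, inv \<gamma> y). (x, y) \<leftarrow> D c, (u, v) \<leftarrow> D x]) \<and>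
     (\<forall>c. teq (tforms (lforms s) (lforms s)) (D (\<gamma> c)) [(\<gamma> x, \<gamma> y). (x, y) \<leftarrow> D c]) \<and>
     (\<forall>c. sum_list [s (e y) x. (x, y) \<leftarrow> D c] = inv \<gamma> c) \<and>
     (\<forall>c. sum_list [s (e x) y. (x, y) \<leftarrow> D c] = inv \<gamma> c) \<and>
     (\<forall>c. e (\<gamma> c) = e c)"

definition mhom_bialgebra :: "('k::field \<Rightarrow> 'a::ab_group_add \<Rightarrow> 'a) \<Rightarrow> ('a \<Rightarrow> 'a \<Rightarrow> 'a) \<Rightarrow> 'a
    \<Rightarrow> ('a \<Rightarrow> ('a \<times> 'a) list) \<Rightarrow> ('a \<Rightarrow> 'k) \<Rightarrow> ('a \<Rightarrow> 'a) \<Rightarrow> bool" where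
  "mhom_bialgebra s mul one D e \<alpha> \<longleftrightarrow>
     mhom_algebra s mul one \<alpha> \<and> mhom_coalgebra s D e \<alpha> \<and>
     (\<forall>a b. teq (tforms (lforms s) (lforms s)) (D (mul a b))
              [(mul x u, mul y v). (x, y) \<leftarrow> D a, (u, v) \<leftarrow> D b]) \<and>
     teq (tforms (lforms s) (lforms s)) (D one) [(one, one)] \<and>
     (\<forall>a b. e (mul a b) = e a * e b) \<and> e one = 1"

definition weak_hom_module_algebra :: "('k::field \<Rightarrow> 'h::ab_group_add \<Rightarrow> 'h) \<Rightarrow> ('h \<Rightarrow> ('h \<times> 'h) list)
    \<Rightarrow> ('h \<Rightarrow> 'k) \<Rightarrow> ('k \<Rightarrow> 'c::ab_group_add \<Rightarrow> 'c) \<Rightarrow> ('c \<Rightarrow> 'c \<Rightarrow> 'c) \<Rightarrow> 'c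
    \<Rightarrow> ('h \<Rightarrow> 'c \<Rightarrow> 'c) \<Rightarrow> bool" where
  "weak_hom_module_algebra sH DH eH sC mC oneC act \<longleftrightarrow>
     bilinear_map sH sC sC act \<and>
     (\<forall>h a b. act h (mC a b) = sum_list [mC (act x a) (act y b). (x, y) \<leftarrow> DH h]) \<and>
     (\<forall>h. act h oneC = sC (eH h) oneC)"

definition hom_comodule :: "('k::field \<Rightarrow> 'h::ab_group_add \<Rightarrow> 'h) \<Rightarrow> ('h \<Rightarrow> ('h \<times> 'h) list)
    \<Rightarrow> ('h \<Rightarrow> 'k) \<Rightarrow> ('h \<Rightarrow> 'h) \<Rightarrow> ('k \<Rightarrow> 'c::ab_group_add \<Rightarrow> 'c) \<Rightarrow> ('c \<Rightarrow> 'c)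
    \<Rightarrow> ('c \<Rightarrow> ('h \<times> 'c) list) \<Rightarrow> bool" where
  "hom_comodule sH DH eH \<alpha> sC \<mu> \<rho> \<longleftrightarrow>
     lin_into sC (tforms (lforms sH) (lforms sC)) \<rho> \<and>
     (\<forall>c. teq (tforms (lforms sH) (tforms (lforms sH) (lforms sC)))
            [(u, v, inv \<mu> y). (x, y) \<leftarrow> \<rho> c, (u, v) \<leftarrow> DH x]
            [(inv \<alpha> x, u, v). (x, y) \<leftarrow> \<rho> c, (u, v) \<leftarrow> \<rho> y]) \<and>
     (\<forall>c. teq (tforms (lforms sH) (lforms sC)) (\<rho> (\<mu> c)) [(\<alpha> x, \<mu> y). (x, y) \<leftarrow> \<rho> c]) \<and>
     (\<forall>c. sum_list [sC (eH x) y. (x, y) \<leftarrow> \<rho> c] = inv \<mu> c)"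

definition hom_comodule_coalgebra :: "('k::field \<Rightarrow> 'h::ab_group_add \<Rightarrow> 'h) \<Rightarrow> ('h \<Rightarrow> 'h \<Rightarrow> 'h) \<Rightarrow> 'h
    \<Rightarrow> ('h \<Rightarrow> ('h \<times> 'h) list) \<Rightarrow> ('h \<Rightarrow> 'k) \<Rightarrow> ('h \<Rightarrow> 'h)
    \<Rightarrow> ('k \<Rightarrow> 'c::ab_group_add \<Rightarrow> 'c) \<Rightarrow> ('c \<Rightarrow> ('c \<times> 'c) list) \<Rightarrow> ('c \<Rightarrow> 'k) \<Rightarrow> ('c \<Rightarrow> 'c)
    \<Rightarrow> ('c \<Rightarrow> ('h \<times> 'c) list) \<Rightarrow> bool" where
  "hom_comodule_coalgebra sH mH oneH DH eH \<alpha> sC DC eC \<beta> \<rho> \<longleftrightarrow>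
     mhom_coalgebra sC DC eC \<beta> \<and> hom_comodule sH DH eH \<alpha> sC \<beta> \<rho> \<and>
     (\<forall>b. teq (tforms (lforms sH) (tforms (lforms sC) (lforms sC)))
            [(x, u, v). (x, y) \<leftarrow> \<rho> b, (u, v) \<leftarrow> DC y]
            [(mH x u, y, v). (b1, b2) \<leftarrow> DC b, (x, y) \<leftarrow> \<rho> b1, (u, v) \<leftarrow> \<rho> b2]) \<and>
     (\<forall>b. sum_list [sH (eC y) x. (x, y) \<leftarrow> \<rho> b] = sH (eC b) oneH)"

definition conv_invertible :: "('k::field \<Rightarrow> 'h::ab_group_add \<Rightarrow> 'h) \<Rightarrow> ('h \<Rightarrow> ('h \<times> 'h) list)
    \<Rightarrow> ('h \<Rightarrow> 'k) \<Rightarrow> ('k \<Rightarrow> 'c::ab_group_add \<Rightarrow> 'c) \<Rightarrow> ('c \<Rightarrow> 'c \<Rightarrow> 'c) \<Rightarrow> 'c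
    \<Rightarrow> ('h \<Rightarrow> 'h \<Rightarrow> 'c) \<Rightarrow> bool" where
  "conv_invertible sH DH eH sC mC oneC \<sigma> \<longleftrightarrow>
     bilinear_map sH sH sC \<sigma> \<and>
     (\<exists>\<sigma>'. bilinear_map sH sH sC \<sigma>' \<and>
        (\<forall>h l. sum_list [mC (\<sigma> h1 l1) (\<sigma>' h2 l2). (h1, h2) \<leftarrow> DH h, (l1, l2) \<leftarrow> DH l]
               = sC (eH h * eH l) oneC) \<and>
        (\<forall>h l. sum_list [mC (\<sigma>' h1 l1) (\<sigma> h2 l2). (h1, h2) \<leftarrow> DH h, (l1, l2) \<leftarrow> DH l]
               = sC (eH h * eH l) oneC))"

abbreviation FX :: "('k::field \<Rightarrow> 'c::ab_group_add \<Rightarrow> 'c) \<Rightarrow> ('k \<Rightarrow> 'h::ab_group_add \<Rightarrow> 'h)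
    \<Rightarrow> ('c \<times> 'h \<Rightarrow> 'k) set" where
  "FX sC sH \<equiv> tforms (lforms sC) (lforms sH)"

definition Xmul1 where
  "Xmul1 mC mH DH act \<sigma> \<alpha> \<beta> (m::int) (k::int) p q = (case p of (a, h) \<Rightarrow> case q of (b, g) \<Rightarrow>
     [(mC a (mC (act (zpow \<alpha> m x) (zpow \<beta> (-2) b)) (\<sigma> (zpow \<alpha> (k+1) y) (zpow \<alpha> k u))),
       \<alpha> (mH z v)). (w, z) \<leftarrow> DH h, (x, y) \<leftarrow> DH w, (u, v) \<leftarrow> DH g])"

definition Xmul where
  "Xmul mC mH DH act \<sigma> \<alpha> \<beta> m k xs ys = concat [Xmul1 mC mH DH act \<sigma> \<alpha> \<beta> m k p q. p \<leftarrow> xs, q \<leftarrow> ys]"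

definition Xxi1 :: "('c \<Rightarrow> 'c) \<Rightarrow> ('h \<Rightarrow> 'h) \<Rightarrow> 'c \<times> 'h \<Rightarrow> 'c \<times> 'h" where
  "Xxi1 \<beta> \<alpha> p = (\<beta> (fst p), \<alpha> (snd p))"

definition Xxi :: "('c \<Rightarrow> 'c) \<Rightarrow> ('h \<Rightarrow> 'h) \<Rightarrow> ('c \<times> 'h) list \<Rightarrow> ('c \<times> 'h) list" where
  "Xxi \<beta> \<alpha> xs = map (Xxi1 \<beta> \<alpha>) xs"

definition Xdelta1 where
  "Xdelta1 mH DH DC \<rho> \<alpha> \<beta> (m::int) p = (case p of (a, h) \<Rightarrow>
     [((a1, mH (zpow \<alpha> m c) (inv \<alpha> h1)), (\<beta> c0, h2)).
        (a1, a2) \<leftarrow> DC a, (c, c0) \<leftarrow> \<rho> a2, (h1, h2) \<leftarrow> DH h])"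

definition Xdelta where
  "Xdelta mH DH DC \<rho> \<alpha> \<beta> m xs = concat (map (Xdelta1 mH DH DC \<rho> \<alpha> \<beta> m) xs)"

definition Xeps :: "('c \<Rightarrow> 'k::field) \<Rightarrow> ('h \<Rightarrow> 'k) \<Rightarrow> ('c \<times> 'h) list \<Rightarrow> 'k" where
  "Xeps eC eH xs = sum_list [eC a * eH h. (a, h) \<leftarrow> xs]"

definition X_mhom_bialgebra where
  "X_mhom_bialgebra sC sH mC oneC DC eC \<beta> mH oneH DH eH \<alpha> act \<rho> \<sigma> m k \<longleftrightarrow>
   (let F1 = FX sC sH; F2 = tforms F1 F1; F3 = tforms F1 (tforms F1 F1);
        mul = Xmul mC mH DH act \<sigma> \<alpha> \<beta> m k; mul1 = Xmul1 mC mH DH act \<sigma> \<alpha> \<beta> m k;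
        one = [(oneC, oneH)]; xi = Xxi \<beta> \<alpha>; xi1 = Xxi1 \<beta> \<alpha>; xiinv1 = Xxi1 (inv \<beta>) (inv \<alpha>);
        D = Xdelta mH DH DC \<rho> \<alpha> \<beta> m; D1 = Xdelta1 mH DH DC \<rho> \<alpha> \<beta> m; e = Xeps eC eH in
   \<comment> \<open>monoidal Hom-algebra\<close>
   (\<forall>xs ys zs. teq F1 (mul (xi xs) (mul ys zs)) (mul (mul xs ys) (xi zs))) \<and>
   (\<forall>xs ys. teq F1 (xi (mul xs ys)) (mul (xi xs) (xi ys))) \<and>
   (\<forall>xs. teq F1 (mul xs one) (xi xs) \<and> teq F1 (mul one xs) (xi xs)) \<and>
   teq F1 (xi one) one \<and>
   \<comment> \<open>monoidal Hom-coalgebra\<close>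
   (\<forall>xs. teq F3 [(xiinv1 x, u, v). (x, y) \<leftarrow> D xs, (u, v) \<leftarrow> D1 y]
                 [(u, v, xiinv1 y). (x, y) \<leftarrow> D xs, (u, v) \<leftarrow> D1 x]) \<and>
   (\<forall>xs. teq F2 (D (xi xs)) [(xi1 x, xi1 y). (x, y) \<leftarrow> D xs]) \<and>
   (\<forall>xs. teq F1 [(sC (e [y]) (fst x), snd x). (x, y) \<leftarrow> D xs] (map xiinv1 xs)) \<and>
   (\<forall>xs. teq F1 [(sC (e [x]) (fst y), snd y). (x, y) \<leftarrow> D xs] (map xiinv1 xs)) \<and>
   (\<forall>xs. e (xi xs) = e xs) \<and>
   \<comment> \<open>compatibility\<close>
   (\<forall>xs ys. teq F2 (D (mul xs ys))
       [(p, q). (x1, x2) \<leftarrow> D xs, (y1, y2) \<leftarrow> D ys, p \<leftarrow> mul1 x1 y1, q \<leftarrow> mul1 x2 y2]) \<and>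
   teq F2 (D one) [((oneC, oneH), (oneC, oneH))] \<and>
   (\<forall>xs ys. e (mul xs ys) = e xs * e ys) \<and> e one = 1)"

definition phil1 where
  "phil1 mC mH DH act \<sigma> \<alpha> \<beta> (m::int) (k::int) l p = (case p of (a, h) \<Rightarrow>
     [(mC (act (\<alpha> x) (zpow \<beta> (-1) a)) (\<sigma> (zpow \<alpha> (k+2-m) y) (zpow \<alpha> (k+1) h1)),
       mH (zpow \<alpha> (1-m) z) (\<alpha> h2)). (w, z) \<leftarrow> DH l, (x, y) \<leftarrow> DH w, (h1, h2) \<leftarrow> DH h])"

definition phil where
  "phil mC mH DH act \<sigma> \<alpha> \<beta> m k l xs = concat (map (phil1 mC mH DH act \<sigma> \<alpha> \<beta> m k l) xs)"

definition phir1 where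
  "phir1 mC mH DH \<sigma> \<alpha> (m::int) (k::int) p l = (case p of (a, h) \<Rightarrow>
     [(mC a (\<sigma> (zpow \<alpha> (k+1) h1) (zpow \<alpha> (k+1-m) l1)),
       mH (\<alpha> h2) (zpow \<alpha> (1-m) l2)). (h1, h2) \<leftarrow> DH h, (l1, l2) \<leftarrow> DH l])"

definition phir where
  "phir mC mH DH \<sigma> \<alpha> m k xs l = concat (map (\<lambda>p. phir1 mC mH DH \<sigma> \<alpha> m k p l) xs)"

end

theory Submission
  imports Defs
begin

abbreviation lf :: "('k::field \<Rightarrow> 'v::ab_group_add \<Rightarrow> 'v) \<Rightarrow> ('v \<Rightarrow> 'k) \<Rightarrow> bool" where
  "lf s f \<equiv> Vector_Spaces.linear s (*) f"

lemma vs_field: "vector_space ((*) :: 'k::field \<Rightarrow> 'k \<Rightarrow> 'k)"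
  by unfold_locales (auto simp: algebra_simps)

lemma lf_iff: "lf s f \<longleftrightarrow> vector_space s \<and> (\<forall>x y. f (x + y) = f x + f y) \<and> (\<forall>c x. f (s c x) = c * f x)"
  by (simp add: Vector_Spaces.linear_iff vs_field)

lemma sum_list_map_concat: "sum_list (map f (concat xs)) = sum_list (map (\<lambda>x. sum_list (map f x)) xs)"
  by (induction xs) auto

lemmas evsimps = ev_def sum_list_map_concat map_map o_def prod.case_distrib

lemma lin_comp: "Vector_Spaces.linear s2 s3 A \<Longrightarrow> Vector_Spaces.linear s1 s2 g \<Longrightarrow>
   Vector_Spaces.linear s1 s3 (\<lambda>x. A (g x))"
  using Vector_Spaces.linear_compose[of s1 s2 g s3 A] by (simp add: o_def)

lemma lin_id: "vector_space s \<Longrightarrow> Vector_Spaces.linear s s (\<lambda>x. x)"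
  by (simp add: Vector_Spaces.linear_iff)

lemma lin_vs1: "Vector_Spaces.linear s1 s2 g \<Longrightarrow> vector_space s1"
  by (simp add: Vector_Spaces.linear_iff)
lemma lin_vs2: "Vector_Spaces.linear s1 s2 g \<Longrightarrow> vector_space s2"
  by (simp add: Vector_Spaces.linear_iff)

lemma lin_add: "Vector_Spaces.linear s1 s2 g \<Longrightarrow> g (x + y) = g x + g y"
  by (simp add: Vector_Spaces.linear_iff)
lemma lin_scale: "Vector_Spaces.linear s1 s2 g \<Longrightarrow> g (s1 c x) = s2 c (g x)"
  by (simp add: Vector_Spaces.linear_iff)
lemma lin_zero: "Vector_Spaces.linear s1 s2 g \<Longrightarrow> g 0 = 0"
  using lin_add[of s1 s2 g 0 0] by simp

lemma lf_sum_list: "vector_space s \<Longrightarrow> (\<And>u v. lf s (\<lambda>x. G u v x)) \<Longrightarrow>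
   lf s (\<lambda>x. sum_list (map (\<lambda>(u,v). G u v x) L))"
proof (induction L)
  case Nil
  then show ?case by (simp add: lf_iff)
next
  case (Cons p L)
  obtain u v where p: "p = (u,v)" by (cases p)
  have "lf s (\<lambda>x. G u v x)" by (rule Cons.prems)
  with Cons show ?case by (simp add: p lf_iff algebra_simps)
qed

lemma lf_cmul: "lf s F \<Longrightarrow> lf s (\<lambda>x. c * F x)"
  by (simp add: lf_iff algebra_simps)

lemma lf_F1a: "f \<in> tforms (lforms s1) (lforms s2) \<Longrightarrow> Vector_Spaces.linear s s1 g \<Longrightarrow> lf s (\<lambda>x. f (g x, c))"
  unfolding tforms_def lforms_def by (auto intro: lin_comp)
lemma lf_F1b: "f \<in> tforms (lforms s1) (lforms s2) \<Longrightarrow> Vector_Spaces.linear s s2 g \<Longrightarrow> lf s (\<lambda>x. f (c, g x))"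
  unfolding tforms_def lforms_def by (auto intro: lin_comp)

lemma bil_tforms: "(\<And>v. lf s1 (\<lambda>u. G u v)) \<Longrightarrow> (\<And>u. lf s2 (\<lambda>v. G u v)) \<Longrightarrow>
   (\<lambda>(u,v). G u v) \<in> tforms (lforms s1) (lforms s2)"
  unfolding tforms_def lforms_def by auto

lemma lf_D: "lin_into s' (tforms (lforms s1) (lforms s2)) D \<Longrightarrow> Vector_Spaces.linear s s' g \<Longrightarrow>
   (\<And>v. lf s1 (\<lambda>u. G u v)) \<Longrightarrow> (\<And>u. lf s2 (\<lambda>v. G u v)) \<Longrightarrow>
   lf s (\<lambda>x. sum_list (map (\<lambda>(u,v). G u v) (D (g x))))"
proof -
  assume D: "lin_into s' (tforms (lforms s1) (lforms s2)) D" and g: "Vector_Spaces.linear s s' g"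
    and G1: "\<And>v. lf s1 (\<lambda>u. G u v)" and G2: "\<And>u. lf s2 (\<lambda>v. G u v)"
  have "(\<lambda>(u,v). G u v) \<in> tforms (lforms s1) (lforms s2)" using G1 G2 by (rule bil_tforms)
  with D have "lf s' (\<lambda>y. ev (\<lambda>(u,v). G u v) (D y))" unfolding lin_into_def by blast
  from lin_comp[OF this g] show ?thesis by (simp add: ev_def)
qed

lemma teq_sum: "teq (tforms (lforms s1) (lforms s2)) A B \<Longrightarrow>
   (\<And>v. lf s1 (\<lambda>u. G u v)) \<Longrightarrow> (\<And>u. lf s2 (\<lambda>v. G u v)) \<Longrightarrow>
   sum_list (map (\<lambda>(u,v). G u v) A) = sum_list (map (\<lambda>(u,v). G u v) B)"
  using bil_tforms[of s1 G s2] unfolding teq_def ev_def by blast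

lemma lf_sum_push: "lf s F \<Longrightarrow> F (sum_list (map g L)) = sum_list (map (\<lambda>x. F (g x)) L)"
  by (induction L) (auto simp: lin_add lin_zero)

lemma lin_sum_push: "Vector_Spaces.linear s1 s2 F \<Longrightarrow> F (sum_list (map g L)) = sum_list (map (\<lambda>x. F (g x)) L)"
  by (induction L) (auto simp: lin_add lin_zero)

lemma zpow_bij: "bij f \<Longrightarrow> bij (zpow f n)"
  by (auto simp: zpow_def intro: bij_fn bij_imp_bij_inv)

lemma zpow_lin: "Vector_Spaces.linear s s f \<Longrightarrow> bij f \<Longrightarrow> Vector_Spaces.linear s s (zpow f n)"
proof -
  assume l: "Vector_Spaces.linear s s f" and b: "bij f"
  have li: "Vector_Spaces.linear s s (inv f)"
    using l b by (metis Vector_Spaces.linear_iff_module_hom module_hom_iff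
        module_pair.bij_module_hom_imp_inv_module_hom module_pair.intro)
  have "Vector_Spaces.linear s s (g ^^ n)" if "Vector_Spaces.linear s s g" for g n
    using that
  proof (induction n)
    case 0
    then show ?case using lin_id[OF lin_vs1[OF that]] by (simp add: id_def)
  next
    case (Suc n)
    then show ?case using lin_comp[OF Suc.prems Suc.IH[OF Suc.prems]] by (simp add: o_def)
  qed
  then show ?thesis using l li by (simp add: zpow_def)
qed

lemma zpow_0[simp]: "zpow f 0 x = x" by (simp add: zpow_def)

lemma zpow_succ: assumes "bij f" shows "zpow f (n+1) x = f (zpow f n x)"
proof (cases "n \<ge> 0")
  case True
  then have "nat (n+1) = Suc (nat n)" by simp
  then show ?thesis using True by (simp add: zpow_def)
next
  case False
  have fi: "f (inv f y) = y" for y using assms by (simp add: bij_is_surj surj_f_inv_f)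
  show ?thesis
  proof (cases "n = -1")
    case True then show ?thesis using fi by (simp add: zpow_def)
  next
    case F: False
    then have "nat (-n) = Suc (nat (- (n+1)))" using False by simp
    then show ?thesis using False F fi by (simp add: zpow_def)
  qed
qed

lemma zpow_pred: assumes "bij f" shows "zpow f (n-1) x = inv f (zpow f n x)"
proof -
  have "zpow f n x = f (zpow f (n-1) x)" using zpow_succ[OF assms, of "n-1"] by simp
  then show ?thesis using assms by (simp add: bij_is_inj)
qed

lemma zpow_add: assumes "bij f" shows "zpow f a (zpow f b x) = zpow f (a+b) x"
proof (induction a rule: int_induct[where k=0])
  case base then show ?case by simp
next
  case (step1 i) then show ?case using zpow_succ[OF assms] by (metis add.commute add.left_commute)
next
  case (step2 i) then show ?case using zpow_pred[OF assms] by (metis add.commute add_diff_eq)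
qed

lemma zpow_1: "bij f \<Longrightarrow> zpow f 1 x = f x"
  using zpow_succ[of f 0 x] by simp
lemma zpow_m1: "bij f \<Longrightarrow> zpow f (-1) x = inv f x"
  using zpow_pred[of f 0 x] by simp

lemma zpow_fix: assumes "bij f" "f c = c" shows "zpow f n c = c"
proof (induction n rule: int_induct[where k=0])
  case base then show ?case by simp
next
  case (step1 i) then show ?case using zpow_succ[OF assms(1)] assms(2) by simp
next
  case (step2 i)
  have "inv f c = c" using assms by (metis bij_inv_eq_iff)
  then show ?case using step2 zpow_pred[OF assms(1)] by simp
qed

lemma zpow_inv_fun: assumes "bij f" "\<And>x. e (f x) = e x" shows "e (zpow f n x) = e x"
proof (induction n rule: int_induct[where k=0])
  case base then show ?case by simp
next
  case (step1 i) then show ?case using zpow_succ[OF assms(1)] assms(2) by simp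
next
  case (step2 i)
  have "e (inv f y) = e y" for y using assms by (metis bij_inv_eq_iff)
  then show ?case using step2 zpow_pred[OF assms(1)] by simp
qed


lemma inv_lin: "Vector_Spaces.linear s s g \<Longrightarrow> bij g \<Longrightarrow> Vector_Spaces.linear s s (inv g)"
  using zpow_lin[of s g "-1"] zpow_m1[of g] by (metis ext)

locale Sett =
  fixes sH :: "'k::field \<Rightarrow> 'h::ab_group_add \<Rightarrow> 'h" and mH :: "'h \<Rightarrow> 'h \<Rightarrow> 'h" and oneH :: 'h
    and DH :: "'h \<Rightarrow> ('h \<times> 'h) list" and eH :: "'h \<Rightarrow> 'k" and \<alpha> :: "'h \<Rightarrow> 'h"
    and sC :: "'k \<Rightarrow> 'c::ab_group_add \<Rightarrow> 'c" and mC :: "'c \<Rightarrow> 'c \<Rightarrow> 'c" and oneC :: 'c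
    and DC :: "'c \<Rightarrow> ('c \<times> 'c) list" and eC :: "'c \<Rightarrow> 'k" and \<beta> :: "'c \<Rightarrow> 'c"
    and act :: "'h \<Rightarrow> 'c \<Rightarrow> 'c" and \<rho> :: "'c \<Rightarrow> ('h \<times> 'c) list" and \<sigma> :: "'h \<Rightarrow> 'h \<Rightarrow> 'c"
    and m k :: int
  assumes A1: "mhom_bialgebra sH mH oneH DH eH \<alpha>"
    and A2: "mhom_algebra sC mC oneC \<beta>"
    and A3: "weak_hom_module_algebra sH DH eH sC mC oneC act"
    and A4: "hom_comodule_coalgebra sH mH oneH DH eH \<alpha> sC DC eC \<beta> \<rho>"
    and A5: "conv_invertible sH DH eH sC mC oneC \<sigma>"
    and A6: "X_mhom_bialgebra sC sH mC oneC DC eC \<beta> mH oneH DH eH \<alpha> act \<rho> \<sigma> m k"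
begin

abbreviation "F1 \<equiv> FX sC sH"
abbreviation "F2H \<equiv> tforms (lforms sH) (lforms sH)"
abbreviation "mul \<equiv> Xmul mC mH DH act \<sigma> \<alpha> \<beta> m k"
abbreviation "mul1 \<equiv> Xmul1 mC mH DH act \<sigma> \<alpha> \<beta> m k"
abbreviation "xi \<equiv> Xxi \<beta> \<alpha>"

lemma vsH: "vector_space sH" using A1 by (simp add: mhom_bialgebra_def mhom_algebra_def)
lemma vsC: "vector_space sC" using A2 by (simp add: mhom_algebra_def)
lemma mH_bil: "bilinear_map sH sH sH mH" using A1 by (simp add: mhom_bialgebra_def mhom_algebra_def)
lemma al_lin: "Vector_Spaces.linear sH sH \<alpha>" using A1 by (simp add: mhom_bialgebra_def mhom_algebra_def)
lemma al_bij: "bij \<alpha>" using A1 by (simp add: mhom_bialgebra_def mhom_algebra_def)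
lemma al_one: "\<alpha> oneH = oneH" using A1 by (simp add: mhom_bialgebra_def mhom_algebra_def)
lemma DH_lin: "lin_into sH F2H DH" using A1 by (simp add: mhom_bialgebra_def mhom_coalgebra_def)
lemma DH_al: "teq F2H (DH (\<alpha> c)) [(\<alpha> x, \<alpha> y). (x, y) \<leftarrow> DH c]"
  using A1 by (simp add: mhom_bialgebra_def mhom_coalgebra_def)
lemma counitH: "sum_list [sH (eH x) y. (x, y) \<leftarrow> DH c] = inv \<alpha> c"
  using A1 by (simp add: mhom_bialgebra_def mhom_coalgebra_def)
lemma eH_al: "eH (\<alpha> c) = eH c" using A1 by (simp add: mhom_bialgebra_def mhom_coalgebra_def)
lemma mC_bil: "bilinear_map sC sC sC mC" using A2 by (simp add: mhom_algebra_def)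
lemma be_lin: "Vector_Spaces.linear sC sC \<beta>" using A2 by (simp add: mhom_algebra_def)
lemma be_bij: "bij \<beta>" using A2 by (simp add: mhom_algebra_def)
lemma be_one: "\<beta> oneC = oneC" using A2 by (simp add: mhom_algebra_def)
lemma mC_one_l: "mC oneC a = \<beta> a" using A2 by (simp add: mhom_algebra_def)
lemma mC_one_r: "mC a oneC = \<beta> a" using A2 by (simp add: mhom_algebra_def)
lemma act_bil: "bilinear_map sH sC sC act" using A3 by (simp add: weak_hom_module_algebra_def)
lemma act_one: "act h oneC = sC (eH h) oneC" using A3 by (simp add: weak_hom_module_algebra_def)
lemma si_bil: "bilinear_map sH sH sC \<sigma>" using A5 by (simp add: conv_invertible_def)

lemma X_assoc: "teq F1 (mul (xi xs) (mul ys zs)) (mul (mul xs ys) (xi zs))"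
  using A6 unfolding X_mhom_bialgebra_def Let_def by blast
lemma X_unit_r: "teq F1 (mul xs [(oneC, oneH)]) (xi xs)"
  using A6 unfolding X_mhom_bialgebra_def Let_def by blast
lemma X_unit_l: "teq F1 (mul [(oneC, oneH)] xs) (xi xs)"
  using A6 unfolding X_mhom_bialgebra_def Let_def by blast

lemma lin_idH: "Vector_Spaces.linear sH sH (\<lambda>x. x)" by (rule lin_id[OF vsH])
lemma lin_idC: "Vector_Spaces.linear sC sC (\<lambda>x. x)" by (rule lin_id[OF vsC])

lemma lin_mC1: "Vector_Spaces.linear s sC g \<Longrightarrow> Vector_Spaces.linear s sC (\<lambda>x. mC (g x) c)"
  using mC_bil unfolding bilinear_map_def by (auto intro: lin_comp)
lemma lin_mC2: "Vector_Spaces.linear s sC g \<Longrightarrow> Vector_Spaces.linear s sC (\<lambda>x. mC c (g x))"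
  using mC_bil unfolding bilinear_map_def by (auto intro: lin_comp)
lemma lin_mH1: "Vector_Spaces.linear s sH g \<Longrightarrow> Vector_Spaces.linear s sH (\<lambda>x. mH (g x) c)"
  using mH_bil unfolding bilinear_map_def by (auto intro: lin_comp)
lemma lin_mH2: "Vector_Spaces.linear s sH g \<Longrightarrow> Vector_Spaces.linear s sH (\<lambda>x. mH c (g x))"
  using mH_bil unfolding bilinear_map_def by (auto intro: lin_comp)
lemma lin_act1: "Vector_Spaces.linear s sH g \<Longrightarrow> Vector_Spaces.linear s sC (\<lambda>x. act (g x) c)"
  using act_bil unfolding bilinear_map_def by (auto intro: lin_comp)
lemma lin_act2: "Vector_Spaces.linear s sC g \<Longrightarrow> Vector_Spaces.linear s sC (\<lambda>x. act c (g x))"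
  using act_bil unfolding bilinear_map_def by (auto intro: lin_comp)
lemma lin_si1: "Vector_Spaces.linear s sH g \<Longrightarrow> Vector_Spaces.linear s sC (\<lambda>x. \<sigma> (g x) c)"
  using si_bil unfolding bilinear_map_def by (auto intro: lin_comp)
lemma lin_si2: "Vector_Spaces.linear s sH g \<Longrightarrow> Vector_Spaces.linear s sC (\<lambda>x. \<sigma> c (g x))"
  using si_bil unfolding bilinear_map_def by (auto intro: lin_comp)
lemma lin_be: "Vector_Spaces.linear s sC g \<Longrightarrow> Vector_Spaces.linear s sC (\<lambda>x. \<beta> (g x))"
  using be_lin by (auto intro: lin_comp)
lemma lin_zbe: "Vector_Spaces.linear s sC g \<Longrightarrow> Vector_Spaces.linear s sC (\<lambda>x. zpow \<beta> n (g x))"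
  using zpow_lin[OF be_lin be_bij] by (auto intro: lin_comp)
lemma lin_al: "Vector_Spaces.linear s sH g \<Longrightarrow> Vector_Spaces.linear s sH (\<lambda>x. \<alpha> (g x))"
  using al_lin by (auto intro: lin_comp)
lemma lin_zal: "Vector_Spaces.linear s sH g \<Longrightarrow> Vector_Spaces.linear s sH (\<lambda>x. zpow \<alpha> n (g x))"
  using zpow_lin[OF al_lin al_bij] by (auto intro: lin_comp)

lemma lin_ial: "Vector_Spaces.linear s sH g \<Longrightarrow> Vector_Spaces.linear s sH (\<lambda>x. inv \<alpha> (g x))"
  using inv_lin[OF al_lin al_bij] by (auto intro: lin_comp)

lemmas linI = lin_idH lin_idC lin_mC1 lin_mC2 lin_mH1 lin_mH2 lin_act1 lin_act2 lin_si1 lin_si2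
  lin_be lin_zbe lin_al lin_zal lin_ial
lemmas lfI = lf_sum_list[OF vsH] lf_sum_list[OF vsC] lf_D[OF DH_lin] lf_F1a lf_F1b lf_cmul

lemma mul1_a: "f \<in> F1 \<Longrightarrow> lf sC (\<lambda>a. ev f (mul1 (a,h) q))"
  by (cases q) (simp add: Xmul1_def evsimps, (intro lfI linI | assumption)+)

lemma mul1_h: "f \<in> F1 \<Longrightarrow> lf sH (\<lambda>h. ev f (mul1 (a,h) q))"
  by (cases q) (simp add: Xmul1_def evsimps, (intro lfI linI | assumption)+)
lemma mul1_b: "f \<in> F1 \<Longrightarrow> lf sC (\<lambda>b. ev f (mul1 p (b,g)))"
  by (cases p) (simp add: Xmul1_def evsimps, (intro lfI linI | assumption)+)
lemma mul1_g: "f \<in> F1 \<Longrightarrow> lf sH (\<lambda>g. ev f (mul1 p (b,g)))"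
  by (cases p) (simp add: Xmul1_def evsimps, (intro lfI linI | assumption)+)

lemma ev_mul: "ev f (mul xs ys) = sum_list (map (\<lambda>p. sum_list (map (\<lambda>q. ev f (mul1 p q)) ys)) xs)"
  by (simp add: Xmul_def ev_def sum_list_map_concat map_map o_def)

lemma F1_sum: "(\<And>q. F q \<in> F1) \<Longrightarrow> (\<lambda>p. sum_list (map (\<lambda>q. F q p) L)) \<in> F1"
proof -
  assume h: "\<And>q. F q \<in> F1"
  have a: "lf sC (\<lambda>a. F q (a,b))" "lf sH (\<lambda>b. F q (a,b))" for q a b
    using h[of q] unfolding tforms_def lforms_def by auto
  have "lf sC (\<lambda>a. sum_list (map (\<lambda>q. F q (a,b)) L))" for b
    by (induction L) (auto simp: lf_iff vsC a[THEN lin_add] a[THEN lin_scale] algebra_simps)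
  moreover have "lf sH (\<lambda>b. sum_list (map (\<lambda>q. F q (a,b)) L))" for a
    by (induction L) (auto simp: lf_iff vsH a[THEN lin_add] a[THEN lin_scale] algebra_simps)
  ultimately show ?thesis unfolding tforms_def lforms_def by auto
qed

lemma teq_sumF1: "teq F1 A B \<Longrightarrow> F \<in> F1 \<Longrightarrow> sum_list (map F A) = sum_list (map F B)"
  unfolding teq_def ev_def by blast

lemma mul_cong1: assumes "teq F1 A B" shows "teq F1 (mul A C) (mul B C)"
  unfolding teq_def
proof
  fix f assume f: "f \<in> F1"
  have "(\<lambda>p. sum_list (map (\<lambda>q. ev f (mul1 p q)) C)) \<in> F1"
  proof (rule F1_sum)
    fix q show "(\<lambda>p. ev f (mul1 p q)) \<in> F1"
      using mul1_a[OF f] mul1_h[OF f] unfolding tforms_def lforms_def by auto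
  qed
  then show "ev f (mul A C) = ev f (mul B C)" unfolding ev_mul by (rule teq_sumF1[OF assms])
qed

lemma mul_cong2: assumes "teq F1 A B" shows "teq F1 (mul C A) (mul C B)"
  unfolding teq_def
proof
  fix f assume f: "f \<in> F1"
  have e: "ev f (mul C X) = sum_list (map (\<lambda>q. sum_list (map (\<lambda>p. ev f (mul1 p q)) C)) X)" for X
    unfolding ev_mul by (induction C) (auto simp: sum_list_addf)
  have "(\<lambda>q. sum_list (map (\<lambda>p. ev f (mul1 p q)) C)) \<in> F1"
  proof (rule F1_sum)
    fix p show "(\<lambda>q. ev f (mul1 p q)) \<in> F1"
      using mul1_b[OF f] mul1_g[OF f] unfolding tforms_def lforms_def by auto
  qed
  then show "ev f (mul C A) = ev f (mul C B)" unfolding e by (rule teq_sumF1[OF assms])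
qed

lemma teq_refl: "teq F A A" by (simp add: teq_def)
lemma teq_sym: "teq F A B \<Longrightarrow> teq F B A" by (simp add: teq_def)
lemma teq_trans[trans]: "teq F A B \<Longrightarrow> teq F B C \<Longrightarrow> teq F A C" by (simp add: teq_def)

lemma ev_xi: "ev f (xi A) = ev (\<lambda>p. f (Xxi1 \<beta> \<alpha> p)) A"
  by (simp add: Xxi_def ev_def o_def)

lemma xi_cong: assumes "teq F1 A B" shows "teq F1 (xi A) (xi B)"
  unfolding teq_def
proof
  fix f assume f: "f \<in> F1"
  have "(\<lambda>p. f (Xxi1 \<beta> \<alpha> p)) \<in> F1"
    using f unfolding tforms_def lforms_def Xxi1_def
    by (auto intro: lin_comp[OF _ be_lin] lin_comp[OF _ al_lin])
  then show "ev f (xi A) = ev f (xi B)" unfolding ev_xi using assms teq_def by blast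
qed

lemma xi_inj: assumes "teq F1 (xi A) (xi B)" shows "teq F1 A B"
  unfolding teq_def
proof
  fix f assume f: "f \<in> F1"
  define f' where "f' = (\<lambda>p. f (inv \<beta> (fst p), inv \<alpha> (snd p)))"
  have "f' \<in> F1"
    using f unfolding tforms_def lforms_def f'_def
    by (auto intro: lin_comp[OF _ inv_lin[OF be_lin be_bij]] lin_comp[OF _ inv_lin[OF al_lin al_bij]])
  then have "ev f' (xi A) = ev f' (xi B)" using assms teq_def by blast
  moreover have "(\<lambda>p. f' (Xxi1 \<beta> \<alpha> p)) = f"
    using be_bij al_bij by (auto simp: f'_def Xxi1_def bij_is_inj)
  ultimately show "ev f A = ev f B" unfolding ev_xi by simp
qed

lemma DH_al_sum: "(\<And>v. lf sH (\<lambda>u. G u v)) \<Longrightarrow> (\<And>u. lf sH (\<lambda>v. G u v)) \<Longrightarrow>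
  sum_list (map (\<lambda>(u,v). G u v) (DH (\<alpha> c))) = sum_list (map (\<lambda>(u,v). G (\<alpha> u) (\<alpha> v)) (DH c))"
  using teq_sum[OF DH_al[of c], of G] by (simp add: map_map o_def prod.case_distrib)

lemma DH_zpow: "(\<And>v. lf sH (\<lambda>u. G u v)) \<Longrightarrow> (\<And>u. lf sH (\<lambda>v. G u v)) \<Longrightarrow>
  sum_list (map (\<lambda>(u,v). G u v) (DH (zpow \<alpha> n h))) =
  sum_list (map (\<lambda>(u,v). G (zpow \<alpha> n u) (zpow \<alpha> n v)) (DH h))"
proof (induction n arbitrary: G rule: int_induct[where k=0])
  case base then show ?case by simp
next
  case (step1 i)
  have l1: "lf sH (\<lambda>u. G (\<alpha> u) v)" for v by (rule lin_comp[OF step1.prems(1) al_lin])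
  have l2: "lf sH (\<lambda>v. G u (\<alpha> v))" for u by (rule lin_comp[OF step1.prems(2) al_lin])
  show ?case
    unfolding zpow_succ[OF al_bij]
    by (simp add: DH_al_sum[of G, OF step1.prems] step1.IH[of "\<lambda>u v. G (\<alpha> u) (\<alpha> v)", OF l1 l2])
next
  case (step2 i)
  let ?G = "\<lambda>u v. G (inv \<alpha> u) (inv \<alpha> v)"
  have l1: "lf sH (\<lambda>u. ?G u v)" for v by (rule lin_comp[OF step2.prems(1) inv_lin[OF al_lin al_bij]])
  have l2: "lf sH (\<lambda>v. ?G u v)" for u by (rule lin_comp[OF step2.prems(2) inv_lin[OF al_lin al_bij]])
  have ia: "inv \<alpha> (\<alpha> x) = x" "\<alpha> (inv \<alpha> x) = x" for x
    using al_bij by (auto simp: bij_is_inj bij_is_surj surj_f_inv_f)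
  have "sum_list (map (\<lambda>(u,v). ?G u v) (DH (zpow \<alpha> i h))) =
        sum_list (map (\<lambda>(u,v). ?G (zpow \<alpha> i u) (zpow \<alpha> i v)) (DH h))"
    by (rule step2.IH[OF l1 l2])
  moreover have "zpow \<alpha> i h = \<alpha> (zpow \<alpha> (i - 1) h)"
    using zpow_succ[OF al_bij, of "i - 1"] by simp
  moreover have "sum_list (map (\<lambda>(u,v). ?G u v) (DH (\<alpha> (zpow \<alpha> (i - 1) h)))) =
     sum_list (map (\<lambda>(u,v). G u v) (DH (zpow \<alpha> (i - 1) h)))"
    using DH_al_sum[of ?G "zpow \<alpha> (i - 1) h", OF l1 l2] by (simp only: ia)
  moreover have "(\<lambda>(u,v). ?G (zpow \<alpha> i u) (zpow \<alpha> i v)) = (\<lambda>(u,v). G (zpow \<alpha> (i - 1) u) (zpow \<alpha> (i - 1) v))"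
    by (simp add: zpow_pred[OF al_bij])
  ultimately show ?case by simp
qed

lemma zpow_f: "bij f \<Longrightarrow> zpow f n (f x) = zpow f (n+1) x"
  using zpow_add[of f n 1 x] zpow_1[of f x] by simp

lemma ev_xi2: "ev f (xi A) = ev (\<lambda>(c,g). f (\<beta> c, \<alpha> g)) A"
  by (simp add: ev_xi Xxi1_def split_def)

lemma B1e: assumes f: "f \<in> F1"
  shows "ev f (xi (phil1 mC mH DH act \<sigma> \<alpha> \<beta> m k l (a,h))) = ev f (mul1 (oneC, zpow \<alpha> (1-m) l) (\<beta> a, \<alpha> h))"
  apply (simp only: ev_xi2)
  apply (simp add: Xmul1_def phil1_def evsimps mC_one_l zpow_f al_bij be_bij)
  apply (subst DH_al_sum)
    apply ((intro lfI linI | rule f)+)[2]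
  apply (subst DH_zpow)
    apply ((intro lfI linI | rule f)+)[2]
  apply (subst DH_zpow)
    apply ((intro lfI linI | rule f)+)[2]
  apply (simp add: zpow_add al_bij zpow_f zpow_1 add.commute diff_add_eq)
  done


lemma be_mult: "\<beta> (mC a b) = mC (\<beta> a) (\<beta> b)" using A2 by (simp add: mhom_algebra_def)
lemma mC_sc1: "mC (sC c a) b = sC c (mC a b)"
  using lin_scale[of sC sC "\<lambda>a. mC a b" c a] mC_bil unfolding bilinear_map_def by auto
lemma mC_sc2: "mC b (sC c a) = sC c (mC b a)"
  using lin_scale[of sC sC "mC b" c a] mC_bil unfolding bilinear_map_def by auto
lemma F1_sc1: "f \<in> F1 \<Longrightarrow> f (sC c a, b) = c * f (a, b)"
  unfolding tforms_def lforms_def using lin_scale[of sC "(*)" "\<lambda>a. f (a, b)"] by auto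
lemma sum_cmul: "sum_list (map (\<lambda>(u,v). (c::'k) * G u v) L) = c * sum_list (map (\<lambda>(u,v). G u v) L)"
  by (induction L) (auto simp: algebra_simps)
lemma counit_sum: "lf sH \<Phi> \<Longrightarrow> sum_list (map (\<lambda>(x,y). eH x * \<Phi> y) (DH w)) = \<Phi> (inv \<alpha> w)"
proof -
  assume l: "lf sH \<Phi>"
  have "\<Phi> (inv \<alpha> w) = \<Phi> (sum_list [sH (eH x) y. (x, y) \<leftarrow> DH w])" by (simp add: counitH)
  also have "\<dots> = sum_list (map (\<lambda>(x,y). eH x * \<Phi> y) (DH w))"
    by (simp add: lf_sum_push[OF l] prod.case_distrib lin_scale[OF l])
  finally show ?thesis by simp
qed
lemma zbe_one: "zpow \<beta> n oneC = oneC" by (rule zpow_fix[OF be_bij be_one])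
lemma zal_one: "zpow \<alpha> n oneH = oneH" by (rule zpow_fix[OF al_bij al_one])
lemma eH_zal: "eH (zpow \<alpha> n x) = eH x" by (rule zpow_inv_fun[of \<alpha> eH, OF al_bij eH_al])
lemma inv_al: "inv \<alpha> (\<alpha> x) = x" using al_bij by (simp add: bij_is_inj)

lemma B2e: assumes f: "f \<in> F1"
  shows "ev f (xi (phir1 mC mH DH \<sigma> \<alpha> m k (a,h) l)) = ev f (mul1 (\<beta> a, \<alpha> h) (oneC, zpow \<alpha> (1-m) l))"
  apply (simp only: ev_xi2)
  apply (simp add: Xmul1_def phir1_def evsimps zbe_one act_one eH_zal mC_sc1 mC_sc2 mC_one_l F1_sc1[OF f] sum_cmul)
  apply (subst counit_sum)
   apply ((intro lfI linI | rule f)+)[1]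
  apply (subst DH_al_sum)
    apply ((intro lfI linI | rule f)+)[2]
  apply (subst DH_zpow)
    apply ((intro lfI linI | rule f)+)[2]
  apply (simp add: zpow_add al_bij zpow_f zpow_1 inv_al be_mult add.commute diff_add_eq add_diff_eq)
  done

lemma B1: "teq F1 (xi (phil mC mH DH act \<sigma> \<alpha> \<beta> m k l xs)) (mul [(oneC, zpow \<alpha> (1-m) l)] (xi xs))"
  unfolding teq_def
proof
  fix f assume f: "f \<in> F1"
  show "ev f (xi (phil mC mH DH act \<sigma> \<alpha> \<beta> m k l xs)) = ev f (mul [(oneC, zpow \<alpha> (1-m) l)] (xi xs))"
  proof (induction xs)
    case Nil then show ?case by (simp add: phil_def Xmul_def Xxi_def ev_def)
  next
    case (Cons p xs)
    obtain a h where p: "p = (a,h)" by (cases p)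
    have e: "ev f (xi (phil1 mC mH DH act \<sigma> \<alpha> \<beta> m k l (a,h))) = ev f (mul1 (oneC, zpow \<alpha> (1-m) l) (\<beta> a, \<alpha> h))"
      by (rule B1e[OF f])
    show ?case using Cons e by (simp add: p phil_def Xmul_def Xxi_def Xxi1_def ev_def)
  qed
qed

lemma B2: "teq F1 (xi (phir mC mH DH \<sigma> \<alpha> m k xs l)) (mul (xi xs) [(oneC, zpow \<alpha> (1-m) l)])"
  unfolding teq_def
proof
  fix f assume f: "f \<in> F1"
  show "ev f (xi (phir mC mH DH \<sigma> \<alpha> m k xs l)) = ev f (mul (xi xs) [(oneC, zpow \<alpha> (1-m) l)])"
  proof (induction xs)
    case Nil then show ?case by (simp add: phir_def Xmul_def Xxi_def ev_def)
  next
    case (Cons p xs)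
    obtain a h where p: "p = (a,h)" by (cases p)
    have e: "ev f (xi (phir1 mC mH DH \<sigma> \<alpha> m k (a,h) l)) = ev f (mul1 (\<beta> a, \<alpha> h) (oneC, zpow \<alpha> (1-m) l))"
      by (rule B2e[OF f])
    show ?case using Cons e by (simp add: p phir_def Xmul_def Xxi_def Xxi1_def ev_def)
  qed
qed

lemma xiL: "xi [(oneC, zpow \<alpha> (1-m) l)] = [(oneC, zpow \<alpha> (1-m) (\<alpha> l))]"
proof -
  have "\<alpha> (zpow \<alpha> (1-m) l) = zpow \<alpha> (1-m) (\<alpha> l)"
    using zpow_succ[OF al_bij, of "1-m" l] zpow_f[OF al_bij, of "1-m" l] by simp
  then show ?thesis by (simp add: Xxi_def Xxi1_def be_one)
qed

lemma main:
  "\<forall>xs :: ('c \<times> 'h) list.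
           teq (FX sC sH) (phil mC mH DH act \<sigma> \<alpha> \<beta> m k oneH xs) (Xxi \<beta> \<alpha> xs) \<and>
           teq (FX sC sH) (phir mC mH DH \<sigma> \<alpha> m k xs oneH) (Xxi \<beta> \<alpha> xs) \<and>
           (\<forall>l g. teq (FX sC sH)
              (phil mC mH DH act \<sigma> \<alpha> \<beta> m k (\<alpha> l) (phir mC mH DH \<sigma> \<alpha> m k xs g))
              (phir mC mH DH \<sigma> \<alpha> m k (phil mC mH DH act \<sigma> \<alpha> \<beta> m k l xs) (\<alpha> g)))"
proof (intro allI conjI)
  fix xs :: "('c \<times> 'h) list"
  show "teq F1 (phil mC mH DH act \<sigma> \<alpha> \<beta> m k oneH xs) (xi xs)"
    apply (rule xi_inj)
    apply (rule teq_trans[OF B1])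
    using X_unit_l[of "xi xs"] by (simp add: zal_one)
  show "teq F1 (phir mC mH DH \<sigma> \<alpha> m k xs oneH) (xi xs)"
    apply (rule xi_inj)
    apply (rule teq_trans[OF B2])
    using X_unit_r[of "xi xs"] by (simp add: zal_one)
  fix l g
  let ?L = "\<lambda>l. [(oneC, zpow \<alpha> (1-m) l)]"
  let ?pl = "phil mC mH DH act \<sigma> \<alpha> \<beta> m k" and ?pr = "phir mC mH DH \<sigma> \<alpha> m k"
  have "teq F1 (xi (?pl (\<alpha> l) (?pr xs g))) (mul (?L (\<alpha> l)) (xi (?pr xs g)))" by (rule B1)
  also have "teq F1 \<dots> (mul (?L (\<alpha> l)) (mul (xi xs) (?L g)))" by (rule mul_cong2[OF B2])
  also have "mul (?L (\<alpha> l)) (mul (xi xs) (?L g)) = mul (xi (?L l)) (mul (xi xs) (?L g))" by (simp only: xiL)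
  also have "teq F1 \<dots> (mul (mul (?L l) (xi xs)) (xi (?L g)))" by (rule X_assoc)
  also have "teq F1 \<dots> (mul (xi (?pl l xs)) (xi (?L g)))" by (rule mul_cong1[OF teq_sym[OF B1]])
  also have "\<dots> = mul (xi (?pl l xs)) (?L (\<alpha> g))" by (simp only: xiL)
  also have "teq F1 \<dots> (xi (?pr (?pl l xs) (\<alpha> g)))" by (rule teq_sym[OF B2])
  finally show "teq F1 (?pl (\<alpha> l) (?pr xs g)) (?pr (?pl l xs) (\<alpha> g))" by (rule xi_inj)
qed

end

theorem lemma4p9:
  fixes sH :: "'k::field \<Rightarrow> 'h::ab_group_add \<Rightarrow> 'h" and mH :: "'h \<Rightarrow> 'h \<Rightarrow> 'h" and oneH :: 'h
    and DH :: "'h \<Rightarrow> ('h \<times> 'h) list" and eH :: "'h \<Rightarrow> 'k" and \<alpha> :: "'h \<Rightarrow> 'h"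
    and sC :: "'k \<Rightarrow> 'c::ab_group_add \<Rightarrow> 'c" and mC :: "'c \<Rightarrow> 'c \<Rightarrow> 'c" and oneC :: 'c
    and DC :: "'c \<Rightarrow> ('c \<times> 'c) list" and eC :: "'c \<Rightarrow> 'k" and \<beta> :: "'c \<Rightarrow> 'c"
    and act :: "'h \<Rightarrow> 'c \<Rightarrow> 'c" and \<rho> :: "'c \<Rightarrow> ('h \<times> 'c) list" and \<sigma> :: "'h \<Rightarrow> 'h \<Rightarrow> 'c"
    and m k :: int
  assumes "mhom_bialgebra sH mH oneH DH eH \<alpha>"
    and "mhom_algebra sC mC oneC \<beta>"
    and "weak_hom_module_algebra sH DH eH sC mC oneC act"
    and "hom_comodule_coalgebra sH mH oneH DH eH \<alpha> sC DC eC \<beta> \<rho>"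
    and "conv_invertible sH DH eH sC mC oneC \<sigma>"
    and "X_mhom_bialgebra sC sH mC oneC DC eC \<beta> mH oneH DH eH \<alpha> act \<rho> \<sigma> m k"
  shows "\<forall>xs :: ('c \<times> 'h) list.
           teq (FX sC sH) (phil mC mH DH act \<sigma> \<alpha> \<beta> m k oneH xs) (Xxi \<beta> \<alpha> xs) \<and>
           teq (FX sC sH) (phir mC mH DH \<sigma> \<alpha> m k xs oneH) (Xxi \<beta> \<alpha> xs) \<and>
           (\<forall>l g. teq (FX sC sH)
              (phil mC mH DH act \<sigma> \<alpha> \<beta> m k (\<alpha> l) (phir mC mH DH \<sigma> \<alpha> m k xs g))
              (phir mC mH DH \<sigma> \<alpha> m k (phil mC mH DH act \<sigma> \<alpha> \<beta> m k l xs) (\<alpha> g)))"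
proof -
  interpret Sett sH mH oneH DH eH \<alpha> sC mC oneC DC eC \<beta> act \<rho> \<sigma> m k
    using assms by unfold_locales
  show ?thesis by (rule main)
qed

end
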